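(* Let $n\ge 3$ and $m\ge 1$. Then $$A(n,m)=\big(A(n-1,m-1)\cdot (R_n\setminus\{e\})\big)\ \cup\ A(n-1,m),$$ and this union is disjoint. Here $A(n-1,m-1)\cdot(R_n\setminus\{e\})=\{uw\mid u\in A(n-1,m-1),\ w\in R_n\setminus\{e\}\}$.
   Context: For $k\ge 2$, $A_k$ is the alternating group on $\{1,\dots,k\}$, regarded as the subgroup of $A_n$ fixing $k+1,\dots,n$ for $k\le n$; products are compositions of permutations, rightmost factor applied first. $T(A_k)=\{(1\,2)(i\,j)\mid 1\le i<j\le k\}$, and for $v\in A_k$, $\ell_{T(A_k)}(v)=\min\{r\ge 0\mid v=t_1\cdots t_r,\ t_i\in T(A_k)\}$. $A(k,m)=\{v\in A_k\mid \ell_{T(A_k)}(v)=m\}$ (length computed within $A_k$). $R_n=\{(1\,2)(i\,n)\mid 1\le i<n\}\cup\{e\}$, $e$ the identity. *)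

theory Defs
  imports "HOL-Combinatorics.Combinatorics"
begin

text \<open>Permutations are functions nat \<Rightarrow> nat; products are composition (rightmost first).\<close>

definition altgrp :: "nat \<Rightarrow> (nat \<Rightarrow> nat) set" where
  "altgrp k = {p. p permutes {1..k} \<and> evenperm p}"

definition Tgen :: "nat \<Rightarrow> (nat \<Rightarrow> nat) set" where
  "Tgen k = {transpose 1 2 \<circ> transpose i j | i j. 1 \<le> i \<and> i < j \<and> j \<le> k}"

definition lenT :: "nat \<Rightarrow> (nat \<Rightarrow> nat) \<Rightarrow> nat" where
  "lenT k v = (LEAST r. \<exists>ts. length ts = r \<and> set ts \<subseteq> Tgen k \<and> v = foldr (\<circ>) ts id)"

definition Acl :: "nat \<Rightarrow> nat \<Rightarrow> (nat \<Rightarrow> nat) set" where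
  "Acl k m = {v \<in> altgrp k. lenT k v = m}"

definition Rset :: "nat \<Rightarrow> (nat \<Rightarrow> nat) set" where
  "Rset n = {transpose 1 2 \<circ> transpose i n | i. 1 \<le> i \<and> i < n} \<union> {id}"

end

theory Submission
  imports Defs
begin

definition isW :: "(('a \<Rightarrow> 'a) set) \<Rightarrow> nat \<Rightarrow> ('a \<Rightarrow> 'a) \<Rightarrow> bool" where
  "isW G r v = (\<exists>ts. length ts = r \<and> set ts \<subseteq> G \<and> v = foldr (\<circ>) ts id)"

definition Tr :: "nat \<Rightarrow> (nat \<Rightarrow> nat) set" where
  "Tr k = {transpose i j | i j. i \<in> {1..k} \<and> j \<in> {1..k} \<and> i \<noteq> j}"

abbreviation s12 :: "nat \<Rightarrow> nat" where "s12 \<equiv> transpose 1 2"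

definition sq :: "nat \<Rightarrow> nat \<Rightarrow> nat" where "sq r = (if odd r then s12 else id)"

lemma lenT_isW: "lenT k v = (LEAST r. isW (Tgen k) r v)"
  unfolding lenT_def isW_def by simp

lemma foldr_comp_gen: "foldr (\<circ>) ts f = foldr (\<circ>) ts id \<circ> (f::'a\<Rightarrow>'a)"
  by (induction ts) auto

lemma isW_0[simp]: "isW G 0 v \<longleftrightarrow> v = id"
  unfolding isW_def by auto

lemma isW_Suc_cons: "isW G (Suc r) v \<longleftrightarrow> (\<exists>g w. g \<in> G \<and> isW G r w \<and> v = g \<circ> w)"
proof
  assume "isW G (Suc r) v"
  then obtain ts where ts: "length ts = Suc r" "set ts \<subseteq> G" "v = foldr (\<circ>) ts id"
    unfolding isW_def by blast
  then obtain g ts' where "ts = g # ts'" by (cases ts) auto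
  with ts show "\<exists>g w. g \<in> G \<and> isW G r w \<and> v = g \<circ> w"
    unfolding isW_def by auto
next
  assume "\<exists>g w. g \<in> G \<and> isW G r w \<and> v = g \<circ> w"
  then obtain g w ts where "g \<in> G" "length ts = r" "set ts \<subseteq> G" "w = foldr (\<circ>) ts id" "v = g \<circ> w"
    unfolding isW_def by blast
  then show "isW G (Suc r) v" unfolding isW_def by (intro exI[of _ "g # ts"]) auto
qed

lemma isW_Suc_snoc: "isW G (Suc r) v \<longleftrightarrow> (\<exists>g w. g \<in> G \<and> isW G r w \<and> v = w \<circ> g)"
proof
  assume "isW G (Suc r) v"
  then obtain ts where ts: "length ts = Suc r" "set ts \<subseteq> G" "v = foldr (\<circ>) ts id"
    unfolding isW_def by blast
  then obtain g ts' where tsg: "ts = ts' @ [g]" by (cases ts rule: rev_cases) auto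
  have "v = foldr (\<circ>) ts' id \<circ> g" using ts(3) tsg foldr_comp_gen[of ts' g] by simp
  moreover have "isW G r (foldr (\<circ>) ts' id)" using ts tsg unfolding isW_def by auto
  moreover have "g \<in> G" using ts tsg by auto
  ultimately show "\<exists>g w. g \<in> G \<and> isW G r w \<and> v = w \<circ> g" by blast
next
  assume "\<exists>g w. g \<in> G \<and> isW G r w \<and> v = w \<circ> g"
  then obtain g w ts where "g \<in> G" "length ts = r" "set ts \<subseteq> G" "w = foldr (\<circ>) ts id" "v = w \<circ> g"
    unfolding isW_def by blast
  then show "isW G (Suc r) v" unfolding isW_def
    by (intro exI[of _ "ts @ [g]"]) (auto simp: foldr_comp_gen[of ts g])
qed

lemma isW_mono: "isW G r v \<Longrightarrow> G \<subseteq> H \<Longrightarrow> isW H r v"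
  unfolding isW_def by blast

lemma s12_conj: "s12 \<circ> transpose i j \<circ> s12 = transpose (s12 i) (s12 j)"
  by (rule ext) (simp add: transpose_def)

lemma s12_in: "x \<in> {1..k} \<Longrightarrow> k \<ge> 2 \<Longrightarrow> s12 x \<in> {1..k}"
  by (auto simp: transpose_def)

lemma Tr_conj: "t \<in> Tr k \<Longrightarrow> k \<ge> 2 \<Longrightarrow> s12 \<circ> t \<circ> s12 \<in> Tr k"
proof -
  assume t: "t \<in> Tr k" and k: "k \<ge> 2"
  then obtain i j where ij: "t = transpose i j" "i \<in> {1..k}" "j \<in> {1..k}" "i \<noteq> j"
    unfolding Tr_def by blast
  have e: "s12 \<circ> t \<circ> s12 = transpose (s12 i) (s12 j)" using ij(1) s12_conj by simp
  have "s12 i \<in> {1..k}" "s12 j \<in> {1..k}" using s12_in ij k by auto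
  moreover have "s12 i \<noteq> s12 j" using ij(4) by (metis transpose_involutory)
  ultimately show ?thesis unfolding e Tr_def by blast
qed

lemma Tgen_iff: "g \<in> Tgen k \<longleftrightarrow> (\<exists>t \<in> Tr k. g = s12 \<circ> t)"
proof
  assume "g \<in> Tgen k"
  then obtain i j where ij: "g = s12 \<circ> transpose i j" "1 \<le> i" "i < j" "j \<le> k"
    unfolding Tgen_def by blast
  have "transpose i j \<in> Tr k" using ij(2-4) unfolding Tr_def
    by (intro CollectI exI[of _ i] exI[of _ j]) auto
  then show "\<exists>t \<in> Tr k. g = s12 \<circ> t" using ij(1) by blast
next
  assume "\<exists>t \<in> Tr k. g = s12 \<circ> t"
  then obtain i j where ij: "i \<in> {1..k}" "j \<in> {1..k}" "i \<noteq> j" "g = s12 \<circ> transpose i j"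
    unfolding Tr_def by blast
  show "g \<in> Tgen k"
  proof (cases "i < j")
    case True then show ?thesis using ij unfolding Tgen_def
      by (intro CollectI exI[of _ i] exI[of _ j]) auto
  next
    case False
    have "transpose i j = transpose j i" by (rule transpose_commute)
    with False show ?thesis using ij unfolding Tgen_def
      by (intro CollectI exI[of _ j] exI[of _ i]) auto
  qed
qed

lemma s12_s12: "transpose a b \<circ> (transpose a b \<circ> f) = f"
  by (metis comp_assoc transpose_comp_involutory id_comp)

lemma conv: "k \<ge> 2 \<Longrightarrow> isW (Tgen k) r v \<longleftrightarrow> isW (Tr k) r (v \<circ> sq r)"
proof (induction r arbitrary: v)
  case 0 then show ?case by (simp add: sq_def)
next
  case (Suc r)
  show ?case
  proof (cases "even r")
    case True
    have sqr: "sq r = id" "sq (Suc r) = s12" using True by (auto simp: sq_def)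
    show ?thesis
    proof
      assume "isW (Tgen k) (Suc r) v"
      then obtain g w where g: "g \<in> Tgen k" "isW (Tgen k) r w" "v = w \<circ> g"
        unfolding isW_Suc_snoc by blast
      then obtain t where t: "t \<in> Tr k" "g = s12 \<circ> t" using Tgen_iff by blast
      have "isW (Tr k) r w" using Suc g sqr by simp
      moreover have "v \<circ> s12 = w \<circ> (s12 \<circ> t \<circ> s12)" using g t by (simp add: comp_assoc)
      ultimately show "isW (Tr k) (Suc r) (v \<circ> sq (Suc r))"
        unfolding isW_Suc_snoc sqr using Tr_conj[OF t(1) Suc.prems] by blast
    next
      assume "isW (Tr k) (Suc r) (v \<circ> sq (Suc r))"
      then obtain t W where t: "t \<in> Tr k" "isW (Tr k) r W" "v \<circ> s12 = W \<circ> t"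
        unfolding isW_Suc_snoc sqr by blast
      have "v = v \<circ> s12 \<circ> s12" by (simp add: comp_assoc)
      also have "\<dots> = W \<circ> (s12 \<circ> (s12 \<circ> t \<circ> s12))" using t by (simp add: comp_assoc s12_s12)
      finally have v: "v = W \<circ> (s12 \<circ> (s12 \<circ> t \<circ> s12))" .
      have "s12 \<circ> (s12 \<circ> t \<circ> s12) \<in> Tgen k" using Tgen_iff Tr_conj[OF t(1) Suc.prems] by blast
      moreover have "isW (Tgen k) r W" using Suc t sqr by simp
      ultimately show "isW (Tgen k) (Suc r) v" unfolding isW_Suc_snoc using v by blast
    qed
  next
    case False
    have sqr: "sq r = s12" "sq (Suc r) = id" using False by (auto simp: sq_def)
    show ?thesis
    proof
      assume "isW (Tgen k) (Suc r) v"
      then obtain g w where g: "g \<in> Tgen k" "isW (Tgen k) r w" "v = w \<circ> g"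
        unfolding isW_Suc_snoc by blast
      then obtain t where t: "t \<in> Tr k" "g = s12 \<circ> t" using Tgen_iff by blast
      have "isW (Tr k) r (w \<circ> s12)" by (metis Suc.IH Suc.prems g(2) sqr(1))
      moreover have "v = (w \<circ> s12) \<circ> t" using g t by (simp add: comp_assoc)
      ultimately show "isW (Tr k) (Suc r) (v \<circ> sq (Suc r))"
        unfolding isW_Suc_snoc sqr using t by auto
    next
      assume "isW (Tr k) (Suc r) (v \<circ> sq (Suc r))"
      then obtain t W where t: "t \<in> Tr k" "isW (Tr k) r W" "v = W \<circ> t"
        unfolding isW_Suc_snoc sqr by auto
      have W: "W = (W \<circ> s12) \<circ> s12" by (simp add: comp_assoc)
      have "isW (Tgen k) r (W \<circ> s12)" using Suc t sqr W by metis
      moreover have "v = (W \<circ> s12) \<circ> (s12 \<circ> t)" using t by (simp add: comp_assoc s12_s12)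
      moreover have "s12 \<circ> t \<in> Tgen k" using Tgen_iff t by blast
      ultimately show "isW (Tgen k) (Suc r) v" unfolding isW_Suc_snoc by blast
    qed
  qed
qed


lemma Tr_permutes: "t \<in> Tr k \<Longrightarrow> t permutes {1..k}"
  unfolding Tr_def by (auto intro: permutes_swap_id)

lemma isW_Tr_permutes: "isW (Tr k) r q \<Longrightarrow> q permutes {1..k}"
proof (induction r arbitrary: q)
  case 0 then have q: "q = id" by simp
  show ?case unfolding q by (rule permutes_id)
next
  case (Suc r)
  then obtain t w where "t \<in> Tr k" "isW (Tr k) r w" "q = t \<circ> w" unfolding isW_Suc_cons by blast
  then show ?case using Suc.IH Tr_permutes permutes_compose by blast
qed

lemma s12_Tr: "k \<ge> 2 \<Longrightarrow> s12 \<in> Tr k"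
  unfolding Tr_def by (intro CollectI exI[of _ "1::nat"] exI[of _ "2::nat"]) auto

lemma pad: "k \<ge> 2 \<Longrightarrow> isW (Tr k) r W \<Longrightarrow> isW (Tr k) (Suc (Suc r)) W"
proof -
  assume k: "k \<ge> 2" and W: "isW (Tr k) r W"
  have "isW (Tr k) (Suc r) (s12 \<circ> W)" unfolding isW_Suc_cons using s12_Tr[OF k] W by blast
  then have "isW (Tr k) (Suc (Suc r)) (s12 \<circ> (s12 \<circ> W))" unfolding isW_Suc_cons[of _ "Suc r"] using s12_Tr[OF k] by blast
  then show ?thesis by (simp add: s12_s12)
qed

lemma parity: "isW (Tr k) r W \<Longrightarrow> permutation W \<and> (evenperm W \<longleftrightarrow> even r)"
proof (induction r arbitrary: W)
  case 0 then show ?case by simp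
next
  case (Suc r)
  then obtain t w where tw: "t \<in> Tr k" "isW (Tr k) r w" "W = t \<circ> w" unfolding isW_Suc_cons by blast
  then obtain a b where ab: "t = transpose a b" "a \<noteq> b" unfolding Tr_def by blast
  have pt: "permutation t" using Tr_permutes[OF tw(1)] permutes_imp_permutation by blast
  have pw: "permutation w" "evenperm w \<longleftrightarrow> even r" using Suc.IH[OF tw(2)] by auto
  have "permutation (t \<circ> w)" using pt pw(1) by (rule permutation_compose)
  moreover have "evenperm (t \<circ> w) \<longleftrightarrow> even (Suc r)"
    using evenperm_comp[OF pt pw(1)] ab evenperm_swap[of a b] pw(2) by auto
  ultimately show ?case unfolding tw(3) by blast
qed

lemma gen_Tr: assumes "p permutes {1..k}" shows "\<exists>r. isW (Tr k) r p"
  using assms finite_atLeastAtMost[of 1 k]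
proof (induction p rule: permutes_induct)
  case id then show ?case by (intro exI[of _ 0]) (simp add: id_def)
next
  case (swap a b p)
  then obtain r where "isW (Tr k) r p" by blast
  moreover have "transpose a b \<in> Tr k" using swap unfolding Tr_def by blast
  ultimately have "isW (Tr k) (Suc r) (transpose a b \<circ> p)" unfolding isW_Suc_cons by blast
  then show ?case by blast
qed

lemma gen_T: assumes "k \<ge> 2" "u \<in> altgrp k" shows "\<exists>r. isW (Tgen k) r u"
proof -
  have u: "u permutes {1..k}" "evenperm u" using assms unfolding altgrp_def by auto
  obtain r where r: "isW (Tr k) r u" using gen_Tr[OF u(1)] by blast
  then have "even r" using parity[OF r] u by simp
  then have "isW (Tgen k) r u" using conv[OF assms(1)] r by (simp add: sq_def)
  then show ?thesis by blast
qed

definition pr :: "nat \<Rightarrow> (nat \<Rightarrow> nat) \<Rightarrow> nat \<Rightarrow> nat" where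
  "pr n p x = (if x = n then n else if p x = n then p n else p x)"

lemma prL1: "a \<noteq> n \<Longrightarrow> b \<noteq> n \<Longrightarrow> inj w \<Longrightarrow> pr n (transpose a b \<circ> w) = transpose a b \<circ> pr n w"
  by (rule ext) (auto simp: pr_def transpose_def)

lemma prL2a: "w n = n \<Longrightarrow> a \<noteq> n \<Longrightarrow> inj w \<Longrightarrow> pr n (transpose a n \<circ> w) = pr n w"
  by (rule ext) (auto simp: pr_def transpose_def inj_eq)

lemma prL2b: "w n = a \<Longrightarrow> a \<noteq> n \<Longrightarrow> inj w \<Longrightarrow> pr n (transpose a n \<circ> w) = pr n w"
  by (rule ext) (auto simp: pr_def transpose_def inj_eq)

lemma prL2c: "w n = c \<Longrightarrow> c \<noteq> a \<Longrightarrow> c \<noteq> n \<Longrightarrow> a \<noteq> n \<Longrightarrow> inj w \<Longrightarrow>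
   pr n (transpose a n \<circ> w) = transpose a c \<circ> pr n w"
  by (rule ext) (auto simp: pr_def transpose_def inj_eq)

lemma pr_id: "pr n id = id"
  by (rule ext) (auto simp: pr_def)


lemma proj:
  assumes n: "n \<ge> 3"
  shows "isW (Tr n) r q \<Longrightarrow> (q n = n \<longrightarrow> isW (Tr (n-1)) r (pr n q)) \<and> (q n \<noteq> n \<longrightarrow> 0 < r \<and> isW (Tr (n-1)) (r-1) (pr n q))"
proof (induction r arbitrary: q)
  case 0 then have q: "q = id" by simp
  show ?case unfolding q pr_id by (simp add: id_def)
next
  case (Suc r)
  obtain t w where tw: "t \<in> Tr n" "isW (Tr n) r w" "q = t \<circ> w" using Suc.prems unfolding isW_Suc_cons by blast
  obtain a b where ab: "t = transpose a b" "a \<in> {1..n}" "b \<in> {1..n}" "a \<noteq> b" using tw(1) unfolding Tr_def by blast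
  have wp: "w permutes {1..n}" using isW_Tr_permutes[OF tw(2)] .
  have inj: "inj w" using permutes_inj[OF wp] .
  have wn: "w n \<in> {1..n}" using permutes_in_image[OF wp] n by auto
  note IH = Suc.IH[OF tw(2)]
  have k2: "n - 1 \<ge> 2" using n by simp
  show ?case
  proof (cases "a \<noteq> n \<and> b \<noteq> n")
    case True
    have eq: "pr n q = t \<circ> pr n w" using prL1 True inj tw(3) ab(1) by simp
    have "a \<in> {1..n-1}" "b \<in> {1..n-1}" using ab True by auto
    then have tk: "t \<in> Tr (n-1)" using ab unfolding Tr_def by blast
    have qn: "q n = n \<longleftrightarrow> w n = n" using tw(3) ab True by (auto simp: transpose_def)
    show ?thesis
    proof (cases "w n = n")
      case True
      then have "isW (Tr (n-1)) r (pr n w)" using IH by simp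
      then have "isW (Tr (n-1)) (Suc r) (pr n q)" unfolding isW_Suc_cons eq using tk by blast
      then show ?thesis using qn True by simp
    next
      case False
      then have "0 < r" "isW (Tr (n-1)) (r-1) (pr n w)" using IH by auto
      then have "isW (Tr (n-1)) (Suc (r-1)) (pr n q)" unfolding isW_Suc_cons eq using tk by blast
      then show ?thesis using qn False \<open>0<r\<close> by simp
    qed
  next
    case False
    have "\<exists>c. t = transpose c n \<and> c \<in> {1..n-1}"
    proof (cases "a = n")
      case True
      have "transpose a b = transpose b a" by (rule transpose_commute)
      then show ?thesis using ab True by (intro exI[of _ b]) auto
    next
      case False
      then have "b = n" using \<open>\<not> (a \<noteq> n \<and> b \<noteq> n)\<close> by blast
      then show ?thesis using ab False by (intro exI[of _ a]) auto
    qed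
    then obtain c where c: "t = transpose c n" "c \<in> {1..n-1}" by blast
    have cn: "c \<noteq> n" using c n by auto
    show ?thesis
    proof (cases "w n = n")
      case True
      have eq: "pr n q = pr n w" using prL2a[OF True cn inj] tw(3) c(1) by simp
      have qn: "q n \<noteq> n" using tw(3) c(1) True cn by (simp add: transpose_def)
      then show ?thesis using IH True eq by simp
    next
      case False
      then have r0: "0 < r" and IHw: "isW (Tr (n-1)) (r-1) (pr n w)" using IH by auto
      show ?thesis
      proof (cases "w n = c")
        case True
        have eq: "pr n q = pr n w" using prL2b[OF True cn inj] tw(3) c(1) by simp
        have qn: "q n = n" using tw(3) c(1) True by simp
        have "isW (Tr (n-1)) (Suc (Suc (r-1))) (pr n w)" using pad[OF k2 IHw] .
        then show ?thesis using qn eq r0 by simp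
      next
        case False2: False
        have eq: "pr n q = transpose c (w n) \<circ> pr n w"
          using prL2c[of w n "w n" c] False2 \<open>w n \<noteq> n\<close> cn inj tw(3) c(1) by auto
        have "w n \<in> {1..n-1}" using wn \<open>w n \<noteq> n\<close> by auto
        then have tk: "transpose c (w n) \<in> Tr (n-1)" using c False2 unfolding Tr_def by blast
        have qn: "q n \<noteq> n" using tw(3) c(1) False2 \<open>w n \<noteq> n\<close> by (simp add: transpose_def)
        have "isW (Tr (n-1)) (Suc (r-1)) (pr n q)" unfolding isW_Suc_cons eq using tk IHw by blast
        then show ?thesis using qn r0 by simp
      qed
    qed
  qed
qed

lemma pr_fix:
  assumes inj: "inj w" and wn: "w n = n" shows "pr n w = w"
proof (rule ext)
  fix x
  show "pr n w x = w x"
  proof (cases "x = n")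
    case True then show ?thesis using wn by (simp add: pr_def)
  next
    case False
    have "w x \<noteq> n"
    proof
      assume "w x = n" then have "w x = w n" using wn by simp
      then show False using False injD[OF inj] by blast
    qed
    then show ?thesis using False by (simp add: pr_def)
  qed
qed

lemma alt_fix: "u \<in> altgrp k \<Longrightarrow> x \<notin> {1..k} \<Longrightarrow> u x = x"
proof -
  assume u: "u \<in> altgrp k" and x: "x \<notin> {1..k}"
  have "u permutes {1..k}" using u unfolding altgrp_def by simp
  then show "u x = x" using x by (rule permutes_not_in)
qed

lemma alt_n: "n \<ge> 3 \<Longrightarrow> u \<in> altgrp (n-1) \<Longrightarrow> u y = n \<longleftrightarrow> y = n"
proof -
  assume n: "n \<ge> 3" and u: "u \<in> altgrp (n-1)"
  have up: "u permutes {1..n-1}" using u unfolding altgrp_def by simp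
  show ?thesis
  proof (cases "y \<in> {1..n-1}")
    case True then have "u y \<in> {1..n-1}" using permutes_in_image[OF up] by simp
    then have "u y \<noteq> n" using n by auto
    moreover have "y \<noteq> n" using True n by auto
    ultimately show ?thesis by simp
  next
    case False then have "u y = y" using permutes_not_in[OF up] by simp
    then show ?thesis by simp
  qed
qed

lemma Tgen_mono: "Tgen (n-1) \<subseteq> Tgen n"
proof
  fix g assume "g \<in> Tgen (n-1)"
  then obtain i j where ij: "g = s12 \<circ> transpose i j" "1 \<le> i" "i < j" "j \<le> n - 1"
    unfolding Tgen_def by blast
  then show "g \<in> Tgen n" unfolding Tgen_def by (intro CollectI exI[of _ i] exI[of _ j]) auto
qed

lemma sq_n: "n \<ge> 3 \<Longrightarrow> sq r n = n"
  by (simp add: sq_def transpose_def)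

lemma s12_ne: "n \<ge> 3 \<Longrightarrow> j \<noteq> n \<Longrightarrow> s12 j \<noteq> n"
  by (simp add: transpose_def)

lemma U1:
  assumes n: "n \<ge> 3" and u: "u \<in> altgrp (n-1)"
  shows "isW (Tgen n) r u \<longleftrightarrow> isW (Tgen (n-1)) r u"
proof
  assume "isW (Tgen (n-1)) r u" then show "isW (Tgen n) r u" using isW_mono Tgen_mono by blast
next
  assume "isW (Tgen n) r u"
  then have W: "isW (Tr n) r (u \<circ> sq r)" using conv n by simp
  have Wn: "(u \<circ> sq r) n = n" using alt_n[OF n u] sq_n[OF n] by simp
  have inj: "inj (u \<circ> sq r)" using permutes_inj[OF isW_Tr_permutes[OF W]] .
  have "isW (Tr (n-1)) r (pr n (u \<circ> sq r))" using proj[OF n W] Wn by blast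
  then have "isW (Tr (n-1)) r (u \<circ> sq r)" by (simp only: pr_fix[OF inj Wn])
  then show "isW (Tgen (n-1)) r u" using conv[of "n-1"] n by simp
qed

lemma prU: "w n = n \<Longrightarrow> (\<And>y. y \<noteq> n \<Longrightarrow> w y \<noteq> n) \<Longrightarrow> a \<noteq> n \<Longrightarrow> pr n (w \<circ> transpose a n) = w"
  by (rule ext) (auto simp: pr_def transpose_def)

lemma prW:
  assumes n: "n \<ge> 3" and u: "u \<in> altgrp (n-1)" and j: "1 \<le> j" "j < n"
  shows "pr n (u \<circ> (s12 \<circ> transpose j n) \<circ> sq (Suc r)) = u \<circ> sq r"
proof (cases "even r")
  case True
  have "s12 \<circ> transpose j n \<circ> s12 = transpose (s12 j) n" using s12_conj[of j n] n by (simp add: transpose_def)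
  then have W: "u \<circ> (s12 \<circ> transpose j n) \<circ> sq (Suc r) = u \<circ> transpose (s12 j) n"
    using True by (simp add: sq_def comp_assoc)
  have "pr n (u \<circ> transpose (s12 j) n) = u"
    by (rule prU) (use alt_n[OF n u] s12_ne[OF n] j in auto)
  then show ?thesis using W True by (simp add: sq_def)
next
  case False
  have W: "u \<circ> (s12 \<circ> transpose j n) \<circ> sq (Suc r) = (u \<circ> s12) \<circ> transpose j n"
    using False by (simp add: sq_def comp_assoc)
  have "pr n ((u \<circ> s12) \<circ> transpose j n) = u \<circ> s12"
    by (rule prU) (use alt_n[OF n u] s12_ne[OF n] j n in \<open>auto simp: transpose_def\<close>)
  then show ?thesis using W False by (simp add: sq_def)
qed

lemma Wmoves:
  assumes n: "n \<ge> 3" and u: "u \<in> altgrp (n-1)" and j: "1 \<le> j" "j < n"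
  shows "(u \<circ> (s12 \<circ> transpose j n) \<circ> sq r) n \<noteq> n"
proof -
  have "(u \<circ> (s12 \<circ> transpose j n) \<circ> sq r) n = u (s12 j)" using sq_n[OF n] by simp
  moreover have "s12 j \<noteq> n" using s12_ne[OF n] j by simp
  ultimately show ?thesis using alt_n[OF n u] by simp
qed

lemma rho_Tgen: "1 \<le> j \<Longrightarrow> j < n \<Longrightarrow> s12 \<circ> transpose j n \<in> Tgen n"
  unfolding Tgen_def by blast

lemma U2:
  assumes n: "n \<ge> 3" and u: "u \<in> altgrp (n-1)" and j: "1 \<le> j" "j < n"
  shows "isW (Tgen n) (Suc r) (u \<circ> (s12 \<circ> transpose j n)) \<longleftrightarrow> isW (Tgen (n-1)) r u"
proof
  assume "isW (Tgen (n-1)) r u"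
  then have "isW (Tgen n) r u" using U1[OF n u] by simp
  then show "isW (Tgen n) (Suc r) (u \<circ> (s12 \<circ> transpose j n))"
    unfolding isW_Suc_snoc using rho_Tgen[OF j] by blast
next
  assume "isW (Tgen n) (Suc r) (u \<circ> (s12 \<circ> transpose j n))"
  then have W: "isW (Tr n) (Suc r) (u \<circ> (s12 \<circ> transpose j n) \<circ> sq (Suc r))" using conv n by simp
  have "isW (Tr (n-1)) (Suc r - 1) (pr n (u \<circ> (s12 \<circ> transpose j n) \<circ> sq (Suc r)))"
    using proj[OF n W] Wmoves[OF n u j] by blast
  then have "isW (Tr (n-1)) r (u \<circ> sq r)" by (simp only: prW[OF n u j] diff_Suc_1)
  then show "isW (Tgen (n-1)) r u" using conv[of "n-1"] n by simp
qed

lemma U0: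
  assumes n: "n \<ge> 3" and u: "u \<in> altgrp (n-1)" and j: "1 \<le> j" "j < n"
  shows "\<not> isW (Tgen n) 0 (u \<circ> (s12 \<circ> transpose j n))"
proof -
  have "(u \<circ> (s12 \<circ> transpose j n) \<circ> sq 0) n \<noteq> n" using Wmoves[OF n u j] .
  moreover have "sq 0 = id" by (simp add: sq_def)
  ultimately have a: "(u \<circ> (s12 \<circ> transpose j n)) n \<noteq> n" by simp
  have "u \<circ> (s12 \<circ> transpose j n) \<noteq> id"
  proof
    assume h: "u \<circ> (s12 \<circ> transpose j n) = id"
    have "(u \<circ> (s12 \<circ> transpose j n)) n = n" by (simp only: h id_apply)
    with a show False by contradiction
  qed
  then show ?thesis by simp
qed

lemma L1: "n \<ge> 3 \<Longrightarrow> u \<in> altgrp (n-1) \<Longrightarrow> lenT n u = lenT (n-1) u"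
  unfolding lenT_isW using U1 by simp

lemma L2:
  assumes n: "n \<ge> 3" and u: "u \<in> altgrp (n-1)" and j: "1 \<le> j" "j < n"
  shows "lenT n (u \<circ> (s12 \<circ> transpose j n)) = Suc (lenT (n-1) u)"
proof -
  have n2: "n - 1 \<ge> 2" using n by simp
  obtain r0 where "isW (Tgen (n-1)) r0 u" using gen_T[OF n2 u] by blast
  then have P: "isW (Tgen n) (Suc r0) (u \<circ> (s12 \<circ> transpose j n))" using U2[OF n u j] by simp
  have e1: "(LEAST r. isW (Tgen n) r (u \<circ> (s12 \<circ> transpose j n)))
      = Suc (LEAST m. isW (Tgen n) (Suc m) (u \<circ> (s12 \<circ> transpose j n)))"
    by (rule Least_Suc[OF P U0[OF n u j]])
  have e2: "(\<lambda>m. isW (Tgen n) (Suc m) (u \<circ> (s12 \<circ> transpose j n))) = (\<lambda>m. isW (Tgen (n-1)) m u)"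
    by (rule ext) (rule U2[OF n u j])
  have "lenT n (u \<circ> (s12 \<circ> transpose j n)) = (LEAST r. isW (Tgen n) r (u \<circ> (s12 \<circ> transpose j n)))"
    by (rule lenT_isW)
  also have "\<dots> = Suc (LEAST m. isW (Tgen n) (Suc m) (u \<circ> (s12 \<circ> transpose j n)))" by (rule e1)
  also have "\<dots> = Suc (LEAST m. isW (Tgen (n-1)) m u)"
    by (rule arg_cong[where f=Suc], rule arg_cong[where f=Least], rule e2)
  also have "\<dots> = Suc (lenT (n-1) u)"
    by (rule arg_cong[where f=Suc], rule lenT_isW[symmetric])
  finally show ?thesis .
qed


lemma restrict_perm: "p permutes S \<Longrightarrow> p a = a \<Longrightarrow> p permutes (S - {a})"
proof -
  assume p: "p permutes S" and a: "p a = a"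
  have u: "\<forall>y. \<exists>!x. p x = y" using p unfolding permutes_def by blast
  have "\<forall>x. x \<notin> S - {a} \<longrightarrow> p x = x"
  proof (intro allI impI)
    fix x assume "x \<notin> S - {a}"
    then have "x \<notin> S \<or> x = a" by blast
    then show "p x = x" using permutes_not_in[OF p] a by blast
  qed
  then show ?thesis using u unfolding permutes_def by blast
qed

lemma set_minus_n: "n \<ge> 1 \<Longrightarrow> {1..n} - {n} = {1..n-1::nat}"
  by auto

lemma F3: "n \<ge> 3 \<Longrightarrow> v \<in> altgrp n \<Longrightarrow> v n = n \<Longrightarrow> v \<in> altgrp (n-1)"
proof -
  assume n: "n \<ge> 3" and v: "v \<in> altgrp n" and vn: "v n = n"
  have vp: "v permutes {1..n}" using v unfolding altgrp_def by simp
  have "v permutes {1..n} - {n}" using vp vn by (rule restrict_perm)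
  then have "v permutes {1..n-1}" using set_minus_n[of n] n by simp
  then show ?thesis using v unfolding altgrp_def by simp
qed

lemma F2: "u \<in> altgrp (n-1) \<Longrightarrow> u \<in> altgrp n"
proof -
  assume u: "u \<in> altgrp (n-1)"
  have "u permutes {1..n-1}" using u unfolding altgrp_def by simp
  moreover have "{1..n-1} \<subseteq> {1..n}" by auto
  ultimately have "u permutes {1..n}" by (rule permutes_subset)
  then show ?thesis using u unfolding altgrp_def by simp
qed

lemma perm_rho: "n \<ge> 3 \<Longrightarrow> 1 \<le> j \<Longrightarrow> j < n \<Longrightarrow> (s12 \<circ> transpose j n) permutes {1..n} \<and> evenperm (s12 \<circ> transpose j n)"
proof -
  assume n: "n \<ge> 3" and j: "1 \<le> j" "j < n"
  have p1: "s12 permutes {1..n}" using n by (intro permutes_swap_id) auto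
  have p2: "transpose j n permutes {1..n}" using n j by (intro permutes_swap_id) auto
  have pc: "(s12 \<circ> transpose j n) permutes {1..n}" using p2 p1 by (rule permutes_compose)
  have q1: "permutation s12" using permutes_imp_permutation[OF _ p1] by simp
  have q2: "permutation (transpose j n)" using permutes_imp_permutation[OF _ p2] by simp
  have "evenperm (s12 \<circ> transpose j n) \<longleftrightarrow> (evenperm s12 \<longleftrightarrow> evenperm (transpose j n))"
    by (rule evenperm_comp[OF q1 q2])
  moreover have "\<not> evenperm s12" using evenperm_swap[of "1::nat" 2] by simp
  moreover have "\<not> evenperm (transpose j n)" using evenperm_swap[of j n] j by simp
  ultimately show ?thesis using pc by simp
qed

lemma F1: "n \<ge> 3 \<Longrightarrow> u \<in> altgrp (n-1) \<Longrightarrow> 1 \<le> j \<Longrightarrow> j < n \<Longrightarrow> u \<circ> (s12 \<circ> transpose j n) \<in> altgrp n"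
proof -
  assume n: "n \<ge> 3" and u: "u \<in> altgrp (n-1)" and j: "1 \<le> j" "j < n"
  have un: "u permutes {1..n}" "evenperm u" using F2[OF u] unfolding altgrp_def by auto
  have r: "(s12 \<circ> transpose j n) permutes {1..n}" "evenperm (s12 \<circ> transpose j n)"
    using perm_rho[OF n j] by auto
  have "(u \<circ> (s12 \<circ> transpose j n)) permutes {1..n}" using r(1) un(1) by (rule permutes_compose)
  moreover have "evenperm (u \<circ> (s12 \<circ> transpose j n))"
    using evenperm_comp[OF permutes_imp_permutation[OF _ un(1)] permutes_imp_permutation[OF _ r(1)]] un(2) r(2)
    by simp
  ultimately show ?thesis unfolding altgrp_def by simp
qed

lemma F4:
  assumes n: "n \<ge> 3" and v: "v \<in> altgrp n" and vn: "v n \<noteq> n"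
  shows "\<exists>u j. u \<in> altgrp (n-1) \<and> 1 \<le> j \<and> j < n \<and> v = u \<circ> (s12 \<circ> transpose j n)"
proof -
  have vp: "v permutes {1..n}" "evenperm v" using v unfolding altgrp_def by auto
  have "\<exists>j. n = v j" using surjD[OF permutes_surj[OF vp(1)], of n] .
  then obtain j where vj0: "n = v j" by blast
  then have vj: "v j = n" by simp
  have jin: "j \<in> {1..n}"
  proof (rule ccontr)
    assume "j \<notin> {1..n}" then have "v j = j" using permutes_not_in[OF vp(1)] by simp
    then show False using vj n \<open>j \<notin> {1..n}\<close> by simp
  qed
  have jn: "j \<noteq> n" using vj vn by auto
  then have j: "1 \<le> j" "j < n" using jin by auto
  define u where "u = v \<circ> transpose j n \<circ> s12"
  have vu: "v = u \<circ> (s12 \<circ> transpose j n)" unfolding u_def by (simp add: comp_assoc s12_s12)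
  have r: "(s12 \<circ> transpose j n) permutes {1..n}" "evenperm (s12 \<circ> transpose j n)"
    using perm_rho[OF n j] by auto
  have p1: "s12 permutes {1..n}" using n by (intro permutes_swap_id) auto
  have p2: "transpose j n permutes {1..n}" using n j by (intro permutes_swap_id) auto
  have up: "u permutes {1..n}" unfolding u_def comp_assoc
    by (intro permutes_compose p1 p2 vp(1))
  have "evenperm (v \<circ> (transpose j n \<circ> s12))"
  proof -
    have q: "(transpose j n \<circ> s12) permutes {1..n}" using p1 p2 by (rule permutes_compose)
    have "evenperm (transpose j n \<circ> s12) \<longleftrightarrow> (evenperm (transpose j n) \<longleftrightarrow> evenperm s12)"
      by (rule evenperm_comp[OF permutes_imp_permutation[OF _ p2] permutes_imp_permutation[OF _ p1]]) simp_all
    moreover have "\<not> evenperm s12" using evenperm_swap[of "1::nat" 2] by simp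
    moreover have "\<not> evenperm (transpose j n)" using evenperm_swap[of j n] j by simp
    ultimately have "evenperm (transpose j n \<circ> s12)" by simp
    then show ?thesis
      using evenperm_comp[OF permutes_imp_permutation[OF _ vp(1)] permutes_imp_permutation[OF _ q]] vp(2)
      by simp
  qed
  then have ue: "evenperm u" unfolding u_def by (simp add: comp_assoc)
  have "u n = n" unfolding u_def using vj n by (simp add: transpose_def)
  then have "u \<in> altgrp (n-1)" using F3[OF n] up ue unfolding altgrp_def by simp
  then show ?thesis using vu j by blast
qed

lemma Rchar: "n \<ge> 3 \<Longrightarrow> \<rho> \<in> Rset n - {id} \<longleftrightarrow> (\<exists>j. 1 \<le> j \<and> j < n \<and> \<rho> = s12 \<circ> transpose j n)"
proof
  assume n: "n \<ge> 3" and "\<rho> \<in> Rset n - {id}"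
  then show "\<exists>j. 1 \<le> j \<and> j < n \<and> \<rho> = s12 \<circ> transpose j n" unfolding Rset_def by blast
next
  assume n: "n \<ge> 3" and "\<exists>j. 1 \<le> j \<and> j < n \<and> \<rho> = s12 \<circ> transpose j n"
  then obtain j where j: "1 \<le> j" "j < n" "\<rho> = s12 \<circ> transpose j n" by blast
  have "\<rho> n = s12 j" using j by simp
  then have "\<rho> n \<noteq> n" using s12_ne[OF n] j by simp
  then have "\<rho> \<noteq> id" by auto
  moreover have "\<rho> \<in> Rset n" unfolding Rset_def using j by blast
  ultimately show "\<rho> \<in> Rset n - {id}" by blast
qed

theorem theorem5p3:
  fixes n m :: nat
  assumes "n \<ge> 3" and "m \<ge> 1"
  shows "Acl n m = ((\<lambda>(u, w). u \<circ> w) ` (Acl (n - 1) (m - 1) \<times> (Rset n - {id}))) \<union> Acl (n - 1) m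
    \<and> ((\<lambda>(u, w). u \<circ> w) ` (Acl (n - 1) (m - 1) \<times> (Rset n - {id}))) \<inter> Acl (n - 1) m = {}"
proof -
  have n: "n \<ge> 3" using assms(1) .
  let ?I = "(\<lambda>(u, w). u \<circ> w) ` (Acl (n - 1) (m - 1) \<times> (Rset n - {id}))"
  have imgI: "x \<in> ?I \<longleftrightarrow> (\<exists>u j. u \<in> Acl (n-1) (m-1) \<and> 1 \<le> j \<and> j < n \<and> x = u \<circ> (s12 \<circ> transpose j n))" for x
  proof
    assume "x \<in> ?I"
    then obtain p where p: "p \<in> Acl (n - 1) (m - 1) \<times> (Rset n - {id})" "x = (\<lambda>(u, w). u \<circ> w) p" by blast
    obtain u \<rho> where pp: "p = (u, \<rho>)" by (cases p)
    have "u \<in> Acl (n-1) (m-1)" "\<rho> \<in> Rset n - {id}" "x = u \<circ> \<rho>" using p unfolding pp by auto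
    then show "\<exists>u j. u \<in> Acl (n-1) (m-1) \<and> 1 \<le> j \<and> j < n \<and> x = u \<circ> (s12 \<circ> transpose j n)"
      using Rchar[OF n, of \<rho>] by blast
  next
    assume "\<exists>u j. u \<in> Acl (n-1) (m-1) \<and> 1 \<le> j \<and> j < n \<and> x = u \<circ> (s12 \<circ> transpose j n)"
    then obtain u j where uj: "u \<in> Acl (n-1) (m-1)" "1 \<le> j" "j < n" "x = u \<circ> (s12 \<circ> transpose j n)" by blast
    then have "s12 \<circ> transpose j n \<in> Rset n - {id}" using Rchar[OF n, of "s12 \<circ> transpose j n"] by blast
    then have "(u, s12 \<circ> transpose j n) \<in> Acl (n - 1) (m - 1) \<times> (Rset n - {id})" using uj by blast
    moreover have "x = (\<lambda>(u, w). u \<circ> w) (u, s12 \<circ> transpose j n)" using uj by simp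
    ultimately show "x \<in> ?I" by (rule rev_image_eqI)
  qed
  have I_sub: "x \<in> Acl n m \<and> x n \<noteq> n" if xI: "x \<in> ?I" for x
  proof -
    obtain u j where uj: "u \<in> Acl (n-1) (m-1)" "1 \<le> j" "j < n" "x = u \<circ> (s12 \<circ> transpose j n)"
      using imgI[of x] xI by blast
    have u: "u \<in> altgrp (n-1)" "lenT (n-1) u = m - 1" using uj(1) unfolding Acl_def by auto
    have "x \<in> altgrp n" using F1[OF n u(1) uj(2,3)] uj(4) by simp
    moreover have "lenT n x = m" using L2[OF n u(1) uj(2,3)] u(2) uj(4) assms(2) by simp
    moreover have "x n \<noteq> n" using Wmoves[OF n u(1) uj(2,3), of 0] uj(4) by (simp add: sq_def)
    ultimately show ?thesis unfolding Acl_def by simp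
  qed
  have B_sub: "x \<in> Acl n m \<and> x n = n" if "x \<in> Acl (n-1) m" for x
  proof -
    have u: "x \<in> altgrp (n-1)" "lenT (n-1) x = m" using that unfolding Acl_def by auto
    have "x \<in> altgrp n" using F2[OF u(1)] .
    moreover have "lenT n x = m" using L1[OF n u(1)] u(2) by simp
    moreover have "x n = n" using alt_n[OF n u(1)] by simp
    ultimately show ?thesis unfolding Acl_def by simp
  qed
  have A_sub: "x \<in> ?I \<union> Acl (n-1) m" if "x \<in> Acl n m" for x
  proof -
    have v: "x \<in> altgrp n" "lenT n x = m" using that unfolding Acl_def by auto
    show ?thesis
    proof (cases "x n = n")
      case True
      have u: "x \<in> altgrp (n-1)" using F3[OF n v(1) True] .
      then have "lenT (n-1) x = m" using L1[OF n u] v(2) by simp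
      then show ?thesis using u unfolding Acl_def by simp
    next
      case False
      obtain u j where uj: "u \<in> altgrp (n-1)" "1 \<le> j" "j < n" "x = u \<circ> (s12 \<circ> transpose j n)"
        using F4[OF n v(1) False] by blast
      have "Suc (lenT (n-1) u) = m" using L2[OF n uj(1-3)] uj(4) v(2) by simp
      then have "lenT (n-1) u = m - 1" by simp
      then have "u \<in> Acl (n-1) (m-1)" using uj(1) unfolding Acl_def by simp
      then have "x \<in> ?I" using imgI[of x] uj by blast
      then show ?thesis by simp
    qed
  qed
  have eq: "Acl n m = ?I \<union> Acl (n-1) m"
  proof (rule set_eqI)
    fix x
    show "x \<in> Acl n m \<longleftrightarrow> x \<in> ?I \<union> Acl (n-1) m"
      using I_sub[of x] B_sub[of x] A_sub[of x] by blast
  qed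
  have disj: "?I \<inter> Acl (n-1) m = {}"
  proof (rule equals0I)
    fix x assume "x \<in> ?I \<inter> Acl (n-1) m"
    then show False using I_sub[of x] B_sub[of x] by blast
  qed
  show ?thesis using eq disj by blast
qed

end
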